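(* Let $p\equiv 3\pmod 4$ be a prime. Then $$\prod_{1\le i<j\le \frac{p-1}{2}}(j^2-i^2)\equiv 1\pmod p.$$ *)

theory Defs
  imports "HOL-Number_Theory.Number_Theory"
begin

end

theory Submission imports Defs begin

lemma prod_minus_fact: "(\<Prod>i\<in>{1..<m}. int (m - i)) = fact (m - 1)"
proof -
  have "(\<Prod>i\<in>{1..<m}. int (m - i)) = (\<Prod>i\<in>{1..m-1}. int i)"
    by (rule prod.reindex_bij_witness[of _ "\<lambda>i. m - i" "\<lambda>i. m - i"]) auto
  then show ?thesis by (simp add: fact_prod)
qed

lemma prod_plus: "(\<Prod>i\<in>{1..<m}. int (m + i)) * fact m = fact (2*m - 1)"
proof (cases "m = 0")
  case True then show ?thesis by simp
next
  case False
  have e1: "m-1 \<le> 2*m-1" "2*m-1-(m-1) = m" using False by auto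
  have "fact (2*m-1) = (of_nat (prod Suc {m..<2*m-1}) :: int) * fact m"
    using fact_split[of "m-1" "2*m-1", where 'a=int] unfolding e1(2) using e1(1) e1(2) by simp
  moreover have "prod Suc {m..<2*m-1} = (\<Prod>i\<in>{1..<m}. m + i)"
    by (rule prod.reindex_bij_witness[of _ "\<lambda>i. i + m - 1" "\<lambda>i. i + 1 - m"]) auto
  then have "(of_nat (prod Suc {m..<2*m-1}) :: int) = of_nat (\<Prod>i\<in>{1..<m}. m + i)" by (simp only:)
  also have "\<dots> = (\<Prod>i\<in>{1..<m}. int (m + i))" by (rule of_nat_prod)
  ultimately show ?thesis by simp
qed

lemma L: "m > 0 \<Longrightarrow> int m * (\<Prod>i\<in>{1..<m}. (int m)^2 - (int i)^2) = fact (2*m - 1)"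
proof -
  assume False: "m > 0"
  have "(\<Prod>i\<in>{1..<m}. (int m)^2 - (int i)^2) = (\<Prod>i\<in>{1..<m}. int (m - i) * int (m + i))"
    by (rule prod.cong) (auto simp: power2_eq_square algebra_simps of_nat_diff)
  also have "\<dots> = (\<Prod>i\<in>{1..<m}. int (m - i)) * (\<Prod>i\<in>{1..<m}. int (m + i))"
    by (rule prod.distrib)
  also have "\<dots> = fact (m - 1) * (\<Prod>i\<in>{1..<m}. int (m + i))"
    by (simp only: prod_minus_fact)
  finally have "int m * (\<Prod>i\<in>{1..<m}. (int m)^2 - (int i)^2) = (int m * fact (m-1)) * (\<Prod>i\<in>{1..<m}. int (m + i))"
    by simp
  also have "int m * fact (m-1) = fact m" using False
    by (metis fact_Suc Suc_pred' neq0_conv of_nat_Suc)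
  finally show ?thesis using prod_plus[of m] by (simp add: mult.commute)
qed

definition S :: "nat \<Rightarrow> (nat \<times> nat) set" where
  "S n = {(i, j). 1 \<le> i \<and> i < j \<and> j \<le> n}"

lemma S_finite: "finite (S n)"
  by (rule finite_subset[of _ "{0..n} \<times> {0..n}"]) (auto simp: S_def)

lemma S_Suc: "S (Suc n) = S n \<union> (\<lambda>i. (i, Suc n)) ` {1..<Suc n}"
  by (auto simp: S_def)

lemma H: "fact n * (\<Prod>(i, j) \<in> S n. (int j ^ 2 - int i ^ 2)) = (\<Prod>j\<in>{1..n}. (fact (2*j - 1) :: int))"
proof (induction n)
  case 0
  have "S 0 = {}" by (auto simp: S_def)
  then show ?case by simp
next
  case (Suc n)
  have d: "S n \<inter> (\<lambda>i. (i, Suc n)) ` {1..<Suc n} = {}" by (auto simp: S_def)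
  have "(\<Prod>(i, j) \<in> S (Suc n). (int j ^ 2 - int i ^ 2)) =
     (\<Prod>(i, j) \<in> S n. (int j ^ 2 - int i ^ 2)) * (\<Prod>(i, j) \<in> (\<lambda>i. (i, Suc n)) ` {1..<Suc n}. (int j ^ 2 - int i ^ 2))"
    unfolding S_Suc by (rule prod.union_disjoint) (use S_finite d in \<open>auto\<close>)
  also have "(\<Prod>(i, j) \<in> (\<lambda>i. (i, Suc n)) ` {1..<Suc n}. (int j ^ 2 - int i ^ 2)) = (\<Prod>i\<in>{1..<Suc n}. int (Suc n) ^ 2 - int i ^ 2)"
    by (subst prod.reindex) (auto simp: inj_on_def)
  finally have e: "fact (Suc n) * (\<Prod>(i, j) \<in> S (Suc n). (int j ^ 2 - int i ^ 2)) =
     (fact n * (\<Prod>(i, j) \<in> S n. (int j ^ 2 - int i ^ 2))) * (int (Suc n) * (\<Prod>i\<in>{1..<Suc n}. int (Suc n) ^ 2 - int i ^ 2))"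
    by (simp add: algebra_simps)
  show ?case unfolding e Suc.IH L[of "Suc n", OF zero_less_Suc] by (simp add: prod.nat_ivl_Suc')
qed

lemma G: "d \<le> p - 1 \<Longrightarrow> [(\<Prod>i\<in>{p-1-d..<p-1}. int (Suc i)) = (-1)^d * fact d] (mod int p)"
proof (induction d)
  case 0 then show ?case by simp
next
  case (Suc d)
  have eq: "{p-1-Suc d..<p-1} = insert (p-1-Suc d) {p-1-d..<p-1}" using Suc.prems by auto
  have "(\<Prod>i\<in>{p-1-Suc d..<p-1}. int (Suc i)) = int (Suc (p-1-Suc d)) * (\<Prod>i\<in>{p-1-d..<p-1}. int (Suc i))"
    unfolding eq using Suc.prems by (subst prod.insert) auto
  moreover have "[int (Suc (p-1-Suc d)) = - int (Suc d)] (mod int p)"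
  proof -
    have h: "int (Suc (p-1-Suc d)) = - int (Suc d) + int p" using Suc.prems by (simp add: of_nat_diff)
    show ?thesis unfolding h by (simp add: cong_iff_dvd_diff)
  qed
  moreover have "[(\<Prod>i\<in>{p-1-d..<p-1}. int (Suc i)) = (-1)^d * fact d] (mod int p)"
    using Suc by simp
  ultimately have "[(\<Prod>i\<in>{p-1-Suc d..<p-1}. int (Suc i)) = (- int (Suc d)) * ((-1)^d * fact d)] (mod int p)"
    by (metis cong_mult)
  then show ?case by (simp add: algebra_simps)
qed

lemma R: assumes "prime p" "odd p" "k \<le> p - 1"
  shows "[fact k * fact (p-1-k) = ((-1)^(k+1) :: int)] (mod int p)"
proof -
  have e1: "p-1-k \<le> p-1" "p-1-(p-1-k) = k" using assms by auto
  have f: "(fact (p-1) :: int) = of_nat (prod Suc {k..<p-1}) * fact k"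
    using fact_split[of "p-1-k" "p-1", where 'a=int] unfolding e1(2) using e1 by simp
  have "(of_nat (prod Suc {k..<p-1}) :: int) = (\<Prod>i\<in>{k..<p-1}. int (Suc i))"
    by (simp only: of_nat_prod)
  then have "[(of_nat (prod Suc {k..<p-1}) :: int) = (-1)^(p-1-k) * fact (p-1-k)] (mod int p)"
    using G[OF e1(1)] unfolding e1(2) by simp
  then have "[(fact (p-1) :: int) = (-1)^(p-1-k) * fact (p-1-k) * fact k] (mod int p)"
    unfolding f by (rule cong_mult) simp
  moreover have "[(fact (p-1) :: int) = -1] (mod int p)" using wilson_theorem[OF assms(1)] by simp
  ultimately have c: "[(-1)^(p-1-k) * (fact (p-1-k) * fact k) = (-1::int)] (mod int p)"
    by (metis cong_sym cong_trans mult.assoc)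
  have s1: "p-1-k+k = p-1" using assms by simp
  have "even (p - 1)" using assms(2) by (cases p) auto
  then have "even (p-1-k + k)" unfolding s1 .
  then have par: "(-1::int)^(p-1-k) = (-1)^k"
    by (metis even_add neg_one_even_power neg_one_odd_power)
  have "[(-1)^k * ((-1)^(p-1-k) * (fact (p-1-k) * fact k)) = (-1)^k * (-1::int)] (mod int p)"
    using c by (rule cong_scalar_left)
  moreover have "(-1)^k * ((-1)^(p-1-k) * (fact (p-1-k) * fact k)) = (fact k * fact (p-1-k) :: int)"
    unfolding par by (simp add: algebra_simps flip: power_add)
  moreover have "(-1)^k * (-1::int) = (-1)^(k+1)" by simp
  ultimately show ?thesis by metis
qed

lemma R1: assumes "prime p" "odd p" "1 \<le> j" "2*j \<le> p - 1"
  shows "[fact (2*j-1) * fact (p-2*j) = (1 :: int)] (mod int p)"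
proof -
  have "[fact (2*j-1) * fact (p-1-(2*j-1)) = ((-1)^(2*j-1+1) :: int)] (mod int p)"
    using R[OF assms(1,2), of "2*j-1"] assms by simp
  moreover have "p-1-(2*j-1) = p - 2*j" "2*j-1+1 = 2*j" using assms by auto
  ultimately show ?thesis by simp
qed


lemma Pair: assumes "prime p" "p = 4*t+3" "s \<le> t"
  shows "[(\<Prod>j\<in>{t+1-s..t+1+s}. (fact (2*j-1) :: int)) = fact (2*t+1)] (mod int p)"
  using assms(3)
proof (induction s)
  case 0 then show ?case by simp
next
  case (Suc s)
  have odd: "odd p" using assms(2) by simp
  have eq: "{t+1-Suc s..t+1+Suc s} = insert (t-s) (insert (t+2+s) {t+1-s..t+1+s})"
    using Suc.prems by auto
  have e: "(\<Prod>j\<in>{t+1-Suc s..t+1+Suc s}. (fact (2*j-1) :: int)) =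
     (fact (2*(t-s)-1) * fact (2*(t+2+s)-1)) * (\<Prod>j\<in>{t+1-s..t+1+s}. (fact (2*j-1) :: int))"
  proof -
    have m1: "t-s \<notin> insert (t+2+s) {t+1-s..t+1+s}" using Suc.prems by auto
    have m2: "t+2+s \<notin> {t+1-s..t+1+s}" by auto
    show ?thesis unfolding eq
      by (simp only: prod.insert[OF _ m1] prod.insert[OF _ m2] finite_insert finite_atLeastAtMost mult.assoc)
  qed
  have c1: "[fact (2*(t-s)-1) * fact (2*(t+2+s)-1) = (1::int)] (mod int p)"
  proof -
    have "p - 2*(t-s) = 2*(t+2+s)-1" using Suc.prems assms(2) by simp
    then show ?thesis using R1[OF assms(1) odd, of "t-s"] Suc.prems assms(2) by simp
  qed
  have h2: "[(\<Prod>j\<in>{t+1-s..t+1+s}. (fact (2*j-1) :: int)) = fact (2*t+1)] (mod int p)"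
    using Suc.IH Suc.prems by (simp only: Suc_leD)
  show ?case unfolding e using cong_mult[OF c1 h2] by (simp only: mult_1)
qed

theorem mainTheorem6:
  fixes p :: nat
  assumes "prime p" and "[p = 3] (mod 4)"
  shows "[(\<Prod>(i, j) \<in> {(i, j). 1 \<le> i \<and> i < j \<and> j \<le> (p - 1) div 2}.
            (int j ^ 2 - int i ^ 2)) = 1] (mod int p)"
proof -
  define t where "t = p div 4"
  have p: "p = 4*t+3" using assms(2) unfolding t_def cong_def by presburger
  define n where "n = (p - 1) div 2"
  have n: "n = 2*t+1" using p unfolding n_def by simp
  have "{t+1-t..t+1+t} = {1..n}" using n by simp
  then have A: "[(\<Prod>j\<in>{1..n}. (fact (2*j-1) :: int)) = fact n] (mod int p)"
    using Pair[OF assms(1) p, of t] unfolding n[symmetric] by (simp only: le_refl)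
  have "fact n * (\<Prod>(i, j) \<in> S n. (int j ^ 2 - int i ^ 2)) = (\<Prod>j\<in>{1..n}. (fact (2*j - 1) :: int))"
    by (rule H)
  with A have B: "[fact n * (\<Prod>(i, j) \<in> S n. (int j ^ 2 - int i ^ 2)) = fact n * 1] (mod int p)"
    by simp
  have "\<not> p dvd fact n" by (subst prime_dvd_fact_iff[OF assms(1)]) (simp add: n p)
  then have "\<not> int p dvd fact n" by (metis int_dvd_int_iff of_nat_fact)
  then have cop: "coprime (fact n :: int) (int p)"
  proof -
    have "prime (int p)" using assms(1) by simp
    then have "coprime (int p) (fact n)" using \<open>\<not> int p dvd fact n\<close> by (rule prime_imp_coprime)
    then show ?thesis by (simp add: coprime_commute)
  qed
  have "[(\<Prod>(i, j) \<in> S n. (int j ^ 2 - int i ^ 2)) = 1] (mod int p)"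
    using B cong_mult_lcancel[OF cop] by blast
  then show ?thesis unfolding S_def n_def .
qed

end
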